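(* Let $P,Q$ be probability measures on $\mathbb{R}^d$. For a probability measure $P$ define $\Lambda_P(v)=\log\int e^{v\cdot y}P(dy)\in(-\infty,\infty]$ and $I_P(x)=\sup_{v\in\mathbb{R}^d}\{v\cdot x-\Lambda_P(v)\}$ (and similarly $\Lambda_Q$, $I_Q$). Then for every $x\in\mathbb{R}^d$, $$\sup_{c>1}\Big\{\frac1cI_P(x)-\frac1{c-1}R_{c/(c-1)}(Q\|P)\Big\}\le I_Q(x)\le\inf_{0<c<1}\Big\{\frac1cI_P(x)+\frac1{1-c}R_{1/(1-c)}(P\|Q)\Big\},$$ with the convention $\infty-\infty=-\infty$ in the lower bound.
   Context: Rényi divergence: let $\nu$ be a $\sigma$-finite positive measure with $dP=p\,d\nu$, $dQ=q\,d\nu$. For $\alpha\in(0,1)$, $R_\alpha(Q\|P)=\frac{1}{\alpha(\alpha-1)}\log\int_{p>0}q^\alpha p^{1-\alpha}\,d\nu$; for $\alpha>1$, the same formula if $Q\ll P$ and $R_\alpha(Q\|P)=+\infty$ if $Q\not\ll P$. *)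

theory Defs
  imports "HOL-Probability.Probability"
begin

definition ln_ennreal :: "ennreal \<Rightarrow> ereal" where
  "ln_ennreal x = (if x = \<infinity> then \<infinity> else if x = 0 then -\<infinity> else ereal (ln (enn2real x)))"

definition logMGF :: "'a::euclidean_space measure \<Rightarrow> 'a \<Rightarrow> ereal" where
  "logMGF P v = ln_ennreal (\<integral>\<^sup>+ y. ennreal (exp (v \<bullet> y)) \<partial>P)"

definition rate_fun :: "'a::euclidean_space measure \<Rightarrow> 'a \<Rightarrow> ereal" where
  "rate_fun P x = (SUP v. ereal (v \<bullet> x) - logMGF P v)"

text \<open>Renyi divergence R_alpha(Q || P), where dP = p d\<nu> and dQ = q d\<nu>.
  For alpha in (0,1): 1/(alpha(alpha-1)) log of the integral over {p>0} of q^alpha p^(1-alpha) d\<nu>;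
  for alpha > 1: the same if Q << P, and +\<infinity> otherwise.
  (absolutely_continuous M N means N << M.)\<close>
definition renyi :: "real \<Rightarrow> 'a measure \<Rightarrow> ('a \<Rightarrow> real) \<Rightarrow> ('a \<Rightarrow> real) \<Rightarrow> ereal" where
  "renyi \<alpha> \<nu> q p =
     (if \<alpha> > 1 \<and> \<not> absolutely_continuous (density \<nu> (\<lambda>y. ennreal (p y))) (density \<nu> (\<lambda>y. ennreal (q y)))
      then \<infinity>
      else ereal (1 / (\<alpha> * (\<alpha> - 1))) *
           ln_ennreal (\<integral>\<^sup>+ y. ennreal (indicator {y. p y > 0} y * (q y powr \<alpha> * p y powr (1 - \<alpha>))) \<partial>\<nu>))"

definition minus_conv :: "ereal \<Rightarrow> ereal \<Rightarrow> ereal" where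
  "minus_conv a b = (if a = \<infinity> \<and> b = \<infinity> then -\<infinity> else a - b)"

end

theory Submission
  imports Defs
begin

lemma holder_nn:
  fixes f g :: "'a \<Rightarrow> real"
  assumes f[measurable]: "f \<in> borel_measurable M" and g[measurable]: "g \<in> borel_measurable M"
    and f0: "\<And>y. f y \<ge> 0" and g0: "\<And>y. g y \<ge> 0" and c: "0 < c" "c < 1"
    and A: "(\<integral>\<^sup>+y. ennreal (f y) \<partial>M) = ennreal A" and B: "(\<integral>\<^sup>+y. ennreal (g y) \<partial>M) = ennreal B"
    and A0: "A \<ge> 0" and B0: "B \<ge> 0"
  shows "(\<integral>\<^sup>+y. ennreal (f y powr c * g y powr (1-c)) \<partial>M) \<le> ennreal (A powr c * B powr (1-c))"
proof (cases "A = 0 \<or> B = 0")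
  case True
  have "AE y in M. f y powr c * g y powr (1-c) = 0"
  proof (cases "A = 0")
    case True
    then have "AE y in M. ennreal (f y) = 0" using A nn_integral_0_iff_AE[of "\<lambda>y. ennreal (f y)" M] by simp
    then show ?thesis by eventually_elim (use f0 in auto)
  next
    case False
    then have "B = 0" using True by simp
    then have "AE y in M. ennreal (g y) = 0" using B nn_integral_0_iff_AE[of "\<lambda>y. ennreal (g y)" M] by simp
    then show ?thesis by eventually_elim (use g0 c in auto)
  qed
  then have "(\<integral>\<^sup>+y. ennreal (f y powr c * g y powr (1-c)) \<partial>M) = (\<integral>\<^sup>+y. 0 \<partial>M)"
    by (intro nn_integral_cong_AE) auto
  then show ?thesis by simp
next
  case False
  then have Ap: "A > 0" and Bp: "B > 0" using A0 B0 by auto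
  define K where "K = A powr c * B powr (1-c)"
  have K0: "K > 0" using Ap Bp by (simp add: K_def)
  have pt: "f y powr c * g y powr (1-c) \<le> (K*c/A) * f y + (K*(1-c)/B) * g y" for y
  proof -
    have "(f y / A) powr c * (g y / B) powr (1-c) \<le> c * (f y / A) + (1-c) * (g y / B)"
    proof (cases "f y = 0 \<or> g y = 0")
      case True then show ?thesis using c f0[of y] g0[of y] Ap Bp by auto
    next
      case False then show ?thesis using c f0[of y] g0[of y] Ap Bp
        by (intro Youngs_inequality_0) auto
    qed
    then have "K * ((f y / A) powr c * (g y / B) powr (1-c)) \<le> K * (c * (f y / A) + (1-c) * (g y / B))"
      using K0 by (intro mult_left_mono) auto
    moreover have "K * ((f y / A) powr c * (g y / B) powr (1-c)) = f y powr c * g y powr (1-c)"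
      using Ap Bp by (simp add: K_def powr_divide)
    moreover have "K * (c * (f y / A) + (1-c) * (g y / B)) = (K*c/A) * f y + (K*(1-c)/B) * g y"
      by (simp add: field_simps)
    ultimately show ?thesis by simp
  qed
  have "(\<integral>\<^sup>+y. ennreal (f y powr c * g y powr (1-c)) \<partial>M)
      \<le> (\<integral>\<^sup>+y. ennreal (K*c/A) * ennreal (f y) + ennreal (K*(1-c)/B) * ennreal (g y) \<partial>M)"
  proof (intro nn_integral_mono)
    fix y
    have "ennreal (f y powr c * g y powr (1-c)) \<le> ennreal ((K*c/A) * f y + (K*(1-c)/B) * g y)"
      using pt by (intro ennreal_leI)
    also have "\<dots> = ennreal (K*c/A) * ennreal (f y) + ennreal (K*(1-c)/B) * ennreal (g y)"
      using K0 Ap Bp c f0[of y] g0[of y]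
      by (simp add: ennreal_mult'[symmetric] ennreal_plus[symmetric] del: ennreal_plus)
    finally show "ennreal (f y powr c * g y powr (1-c)) \<le> ennreal (K*c/A) * ennreal (f y) + ennreal (K*(1-c)/B) * ennreal (g y)" .
  qed
  also have "\<dots> = ennreal (K*c/A) * ennreal A + ennreal (K*(1-c)/B) * ennreal B"
    by (simp add: nn_integral_add nn_integral_cmult A B)
  also have "\<dots> = ennreal (K*c/A * A + K*(1-c)/B * B)"
    using K0 Ap Bp c by (simp add: ennreal_mult'[symmetric] ennreal_plus[symmetric] del: ennreal_plus)
  also have "K*c/A * A + K*(1-c)/B * B = K" using Ap Bp by (simp add: field_simps)
  finally show ?thesis by (simp add: K_def)
qed


lemma ln_ennreal_ennreal: "r > 0 \<Longrightarrow> ln_ennreal (ennreal r) = ereal (ln r)"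
  by (simp add: ln_ennreal_def)

lemma upper_bound:
  fixes P Q \<nu> :: "'a::euclidean_space measure" and p q :: "'a \<Rightarrow> real" and x :: 'a
  assumes PP: "prob_space P" and QQ: "prob_space Q" and snu: "sets \<nu> = sets borel"
    and pm[measurable]: "p \<in> borel_measurable \<nu>" and qm[measurable]: "q \<in> borel_measurable \<nu>"
    and p0: "\<And>y. p y \<ge> 0" and q0: "\<And>y. q y \<ge> 0"
    and Pd: "P = density \<nu> (\<lambda>y. ennreal (p y))" and Qd: "Q = density \<nu> (\<lambda>y. ennreal (q y))"
    and c: "0 < c" "c < 1"
  shows "rate_fun Q x \<le> ereal (1/c) * rate_fun P x + ereal (1/(1-c)) * renyi (1/(1-c)) \<nu> p q"
proof -
  define \<alpha> where "\<alpha> = 1/(1-c)"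
  have a1: "\<alpha> > 1" using c by (simp add: \<alpha>_def)
  define IB where "IB = (\<integral>\<^sup>+ y. ennreal (indicator {y. q y > 0} y * (p y powr \<alpha> * q y powr (1 - \<alpha>))) \<partial>\<nu>)"
  define R where "R = renyi \<alpha> \<nu> p q"
  have Rdef: "R = (if \<not> absolutely_continuous Q P then \<infinity> else ereal (1 / (\<alpha> * (\<alpha> - 1))) * ln_ennreal IB)"
    using a1 unfolding R_def renyi_def IB_def Pd Qd by simp
  have meas: "h \<in> borel_measurable \<nu>" if "h \<in> borel_measurable borel" for h :: "'a \<Rightarrow> real"
    using that measurable_cong_sets[OF snu refl] by blast
  have spnu: "space \<nu> = UNIV" using sets_eq_imp_space_eq[OF snu] by simp
  have cpos: "1/(1-c) > 0" using c by simp
  have Req: "renyi (1/(1-c)) \<nu> p q = R" by (simp add: R_def \<alpha>_def)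
  show ?thesis
    unfolding rate_fun_def[of Q] Req
  proof (rule SUP_least)
    fix v :: 'a
    define E where "E y = exp (v \<bullet> y)" for y
    have Em[measurable]: "E \<in> borel_measurable \<nu>"
      unfolding E_def by (rule meas, intro borel_measurable_continuous_onI continuous_intros)
    show "ereal (v \<bullet> x) - logMGF Q v \<le> ereal (1/c) * rate_fun P x + ereal (1/(1-c)) * R"
    proof (cases "logMGF Q v = \<infinity> \<or> R = \<infinity>")
      case True
      then show ?thesis using cpos by auto
    next
      case False
      then have ac: "absolutely_continuous Q P" and Rne: "R \<noteq> \<infinity>" and Lne: "logMGF Q v \<noteq> \<infinity>"
        using Rdef by (auto split: if_splits)
      have "IB \<noteq> \<infinity>"
      proof
        assume "IB = \<infinity>"
        then have "R = \<infinity>" using Rdef ac a1 by (simp add: ln_ennreal_def)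
        with Rne show False by simp
      qed
      then obtain B where IBB: "IB = ennreal B" and B0: "B \<ge> 0"
        by (cases IB) auto
      have IAeq: "(\<integral>\<^sup>+ y. ennreal (exp (v \<bullet> y)) \<partial>Q) = (\<integral>\<^sup>+ y. ennreal (E y * q y) \<partial>\<nu>)"
        unfolding Qd using Em[unfolded E_def]
        by (subst nn_integral_density) (auto simp: E_def ennreal_mult'[symmetric] q0 mult.commute)
      have "(\<integral>\<^sup>+ y. ennreal (exp (v \<bullet> y)) \<partial>Q) \<noteq> \<infinity>"
        using Lne by (auto simp: logMGF_def ln_ennreal_def)
      then obtain A where IA: "(\<integral>\<^sup>+ y. ennreal (E y * q y) \<partial>\<nu>) = ennreal A" and A0: "A \<ge> 0"
        unfolding IAeq by (cases "(\<integral>\<^sup>+ y. ennreal (E y * q y) \<partial>\<nu>)") auto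
      define f where "f y = E y * q y" for y
      define g where "g y = indicator {y. q y > 0} y * (p y powr \<alpha> * q y powr (1 - \<alpha>))" for y
      have fm[measurable]: "f \<in> borel_measurable \<nu>" unfolding f_def by measurable
      have gm[measurable]: "g \<in> borel_measurable \<nu>" unfolding g_def by measurable
      have hol: "(\<integral>\<^sup>+y. ennreal (f y powr c * g y powr (1-c)) \<partial>\<nu>) \<le> ennreal (A powr c * B powr (1-c))"
      proof (rule holder_nn[OF fm gm _ _ c _ _ A0 B0])
        show "(\<integral>\<^sup>+ y. ennreal (f y) \<partial>\<nu>) = ennreal A" using IA by (simp add: f_def)
        show "(\<integral>\<^sup>+ y. ennreal (g y) \<partial>\<nu>) = ennreal B" using IBB by (simp add: g_def IB_def)
      qed (auto simp: f_def g_def E_def p0 q0)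
      have sP: "sets P = sets borel" using snu Pd by simp
      have aeqp: "AE y in \<nu>. q y = 0 \<longrightarrow> p y = 0"
      proof -
        have "{y\<in>space \<nu>. q y = 0} \<in> null_sets Q"
          unfolding Qd by (subst null_sets_density_iff) auto
        then have "{y\<in>space \<nu>. q y = 0} \<in> null_sets P"
          using ac unfolding absolutely_continuous_def by blast
        then have "AE y in \<nu>. y \<in> {y\<in>space \<nu>. q y = 0} \<longrightarrow> ennreal (p y) = 0"
          unfolding Pd by (subst (asm) null_sets_density_iff) auto
        then show ?thesis by eventually_elim (use p0 spnu in auto)
      qed
      have pw: "f y powr c * g y powr (1-c) = p y * exp (c * (v \<bullet> y))" if "q y > 0" for y
      proof -
        have "(E y * q y) powr c = exp (c * (v \<bullet> y)) * q y powr c"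
          using that by (simp add: powr_mult E_def powr_def ln_mult exp_add distrib_left)
        moreover have "(p y powr \<alpha> * q y powr (1 - \<alpha>)) powr (1-c) = p y * q y powr (-c)"
        proof -
          have "\<alpha> * (1-c) = 1" "(1-\<alpha>)*(1-c) = -c" using c by (auto simp: \<alpha>_def field_simps)
          then show ?thesis by (simp add: powr_mult powr_powr p0)
        qed
        moreover have "q y powr c * q y powr (-c) = 1" using that by (simp add: powr_add[symmetric])
        ultimately show ?thesis using that unfolding f_def g_def
          by (simp add: algebra_simps)
      qed
      define L where "L = (\<integral>\<^sup>+ y. ennreal (exp ((c *\<^sub>R v) \<bullet> y)) \<partial>P)"
      have Lm: "(\<lambda>y. exp ((c *\<^sub>R v) \<bullet> y)) \<in> borel_measurable \<nu>"
        by (rule meas, intro borel_measurable_continuous_onI continuous_intros)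
      have "(\<integral>\<^sup>+y. ennreal (f y powr c * g y powr (1-c)) \<partial>\<nu>) = L"
        unfolding L_def Pd
      proof (subst nn_integral_density)
        show "(\<integral>\<^sup>+y. ennreal (f y powr c * g y powr (1-c)) \<partial>\<nu>) =
          (\<integral>\<^sup>+ y. ennreal (p y) * ennreal (exp ((c *\<^sub>R v) \<bullet> y)) \<partial>\<nu>)"
        proof (rule nn_integral_cong_AE)
          show "AE y in \<nu>. ennreal (f y powr c * g y powr (1-c)) = ennreal (p y) * ennreal (exp ((c *\<^sub>R v) \<bullet> y))"
            using aeqp
          proof eventually_elim
            case (elim y)
            show ?case
            proof (cases "q y > 0")
              case True then show ?thesis by (simp add: pw ennreal_mult' p0)
            next
              case False
              then have "q y = 0" using q0[of y] by simp
              then show ?thesis using elim c by (simp add: g_def)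
            qed
          qed
        qed
      qed (use Lm in auto)
      then have LK: "L \<le> ennreal (A powr c * B powr (1-c))" using hol by simp
      have Lm': "(\<lambda>y. ennreal (exp ((c *\<^sub>R v) \<bullet> y))) \<in> borel_measurable P"
        using Lm measurable_cong_sets[OF snu refl] measurable_cong_sets[OF sP refl] by auto
      have "L \<noteq> 0"
      proof
        assume "L = 0"
        then have "AE y in P. ennreal (exp ((c *\<^sub>R v) \<bullet> y)) = 0"
          using nn_integral_0_iff_AE[OF Lm'] L_def by simp
        then have "AE y in P. False" by simp
        then show False using prob_space.AE_False[OF PP] by simp
      qed
      moreover have "L \<noteq> \<infinity>" using LK by (auto simp: top_unique)
      ultimately obtain Lr where LLr: "L = ennreal Lr" and Lr0: "Lr > 0"
        by (cases L) auto
      have LrK: "Lr \<le> A powr c * B powr (1-c)"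
        using LK LLr Lr0 by (simp add: ennreal_le_iff2)
      have Ap: "A > 0" and Bp: "B > 0" using LrK Lr0 A0 B0 c
        by (auto simp: less_eq_real_def) 
      have "ln Lr \<le> ln (A powr c * B powr (1-c))" using LrK Lr0 by simp
      also have "\<dots> = c * ln A + (1-c) * ln B" using Ap Bp by (simp add: ln_mult ln_powr)
      finally have lnineq: "ln Lr \<le> c * ln A + (1-c) * ln B" .
      have LP: "logMGF P (c *\<^sub>R v) = ereal (ln Lr)"
        unfolding logMGF_def L_def[symmetric] LLr using Lr0 by (simp add: ln_ennreal_ennreal)
      have LQ: "logMGF Q v = ereal (ln A)"
        unfolding logMGF_def IAeq IA using Ap by (simp add: ln_ennreal_ennreal)
      have RR: "R = ereal (1 / (\<alpha> * (\<alpha> - 1)) * ln B)"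
        using Rdef ac IBB Bp by (simp add: ln_ennreal_ennreal)
      have IP: "ereal ((c *\<^sub>R v) \<bullet> x) - logMGF P (c *\<^sub>R v) \<le> rate_fun P x"
        unfolding rate_fun_def by (rule SUP_upper) simp
      then have IP': "ereal (c * (v \<bullet> x) - ln Lr) \<le> rate_fun P x" by (simp add: LP)
      have coef: "1/(1-c) * (1 / (\<alpha> * (\<alpha> - 1))) = (1-c)/c"
        using c by (simp add: \<alpha>_def field_simps)
      have "ln Lr / c \<le> (c * ln A + (1-c) * ln B) / c" using lnineq c by (simp add: divide_right_mono)
      also have "\<dots> = ln A + (1-c)/c * ln B" using c by (simp add: field_simps)
      finally have key: "ln Lr / c \<le> ln A + (1-c)/c * ln B" .
      have real: "v \<bullet> x - ln A \<le> 1/c * (c * (v \<bullet> x) - ln Lr) + 1/(1-c) * (1 / (\<alpha> * (\<alpha> - 1)) * ln B)"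
      proof -
        have "1/c * (c * (v \<bullet> x) - ln Lr) + 1/(1-c) * (1 / (\<alpha> * (\<alpha> - 1)) * ln B)
            = v \<bullet> x - ln Lr / c + (1-c)/c * ln B"
          using c by (simp add: coef[symmetric] field_simps)
        then show ?thesis using key by simp
      qed
      have "ereal (v \<bullet> x) - logMGF Q v = ereal (v \<bullet> x - ln A)" by (simp add: LQ)
      also have "\<dots> \<le> ereal (1/c * (c * (v \<bullet> x) - ln Lr) + 1/(1-c) * (1 / (\<alpha> * (\<alpha> - 1)) * ln B))"
        using real by simp
      also have "\<dots> = ereal (1/c) * ereal (c * (v \<bullet> x) - ln Lr) + ereal (1/(1-c)) * R"
        by (simp add: RR)
      also have "\<dots> \<le> ereal (1/c) * rate_fun P x + ereal (1/(1-c)) * R"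
        using c IP' by (intro add_right_mono ereal_mult_left_mono) auto
      finally show ?thesis .
    qed
  qed
qed


lemma rate_fun_nonneg:
  assumes "prob_space P"
  shows "0 \<le> rate_fun P x"
proof -
  have "logMGF P 0 = 0"
    using prob_space.emeasure_space_1[OF assms] by (simp add: logMGF_def ln_ennreal_def)
  then have "ereal (0 \<bullet> x) - logMGF P 0 = 0" by simp
  moreover have "ereal (0 \<bullet> x) - logMGF P 0 \<le> rate_fun P x"
    unfolding rate_fun_def by (rule SUP_upper) simp
  ultimately show ?thesis by simp
qed

lemma lower_alg:
  fixes IP IQ R :: ereal and c :: real
  assumes c: "c > 1" and IP0: "0 \<le> IP" and h: "IP \<le> ereal c * IQ + ereal (c/(c-1)) * R"
  shows "minus_conv (ereal (1/c) * IP) (ereal (1/(c-1)) * R) \<le> IQ"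
proof (cases IP; cases IQ; cases R)
  fix a b d assume *: "IP = ereal a" "IQ = ereal b" "R = ereal d"
  then have "a \<le> c * b + c/(c-1) * d" using h by simp
  then have "a / c \<le> (c * b + c/(c-1) * d) / c" using c by (simp add: divide_right_mono)
  also have "\<dots> = b + d/(c-1)" using c by (simp add: field_simps)
  finally show ?thesis using * by (simp add: minus_conv_def)
qed (use c IP0 h in \<open>auto simp: minus_conv_def\<close>)

theorem mainTheorem15:
  fixes P Q \<nu> :: "'a::euclidean_space measure"
    and p q :: "'a \<Rightarrow> real"
    and x :: 'a
  assumes "prob_space P" and "prob_space Q"
    and "sets P = sets borel" and "sets Q = sets borel"
    and "sigma_finite_measure \<nu>" and "sets \<nu> = sets borel"
    and "p \<in> borel_measurable \<nu>" and "q \<in> borel_measurable \<nu>"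
    and "\<And>y. p y \<ge> 0" and "\<And>y. q y \<ge> 0"
    and "P = density \<nu> (\<lambda>y. ennreal (p y))"
    and "Q = density \<nu> (\<lambda>y. ennreal (q y))"
  shows "(SUP c\<in>{1<..}. minus_conv (ereal (1 / c) * rate_fun P x)
                                  (ereal (1 / (c - 1)) * renyi (c / (c - 1)) \<nu> q p))
           \<le> rate_fun Q x \<and> rate_fun Q x
           \<le> (INF c\<in>{0<..<1}. ereal (1 / c) * rate_fun P x
                                + ereal (1 / (1 - c)) * renyi (1 / (1 - c)) \<nu> p q)"
proof
  show "(SUP c\<in>{1<..}. minus_conv (ereal (1 / c) * rate_fun P x)
                                  (ereal (1 / (c - 1)) * renyi (c / (c - 1)) \<nu> q p)) \<le> rate_fun Q x"
  proof (rule SUP_least)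
    fix c :: real assume "c \<in> {1<..}"
    then have c: "c > 1" by simp
    have "rate_fun P x \<le> ereal (1/(1/c)) * rate_fun Q x + ereal (1/(1-1/c)) * renyi (1/(1-1/c)) \<nu> q p"
      using c by (intro upper_bound[OF assms(2,1,6,8,7,10,9,12,11)]) auto
    moreover have "1/(1-1/c) = c/(c-1)" using c by (simp add: field_simps)
    ultimately have "rate_fun P x \<le> ereal c * rate_fun Q x + ereal (c/(c-1)) * renyi (c/(c-1)) \<nu> q p"
      by simp
    then show "minus_conv (ereal (1 / c) * rate_fun P x) (ereal (1 / (c - 1)) * renyi (c / (c - 1)) \<nu> q p) \<le> rate_fun Q x"
      by (intro lower_alg[OF c rate_fun_nonneg[OF assms(1)]])
  qed
next
  show "rate_fun Q x \<le> (INF c\<in>{0<..<1}. ereal (1 / c) * rate_fun P x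
                                + ereal (1 / (1 - c)) * renyi (1 / (1 - c)) \<nu> p q)"
    by (rule INF_greatest) (intro upper_bound[OF assms(1,2,6,7,8,9,10,11,12)]; simp)
qed

end
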